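(* Let $G_1=(V_1,E_1)$ and $G_2=(V_2,E_2)$ be finite simple directed graphs and let $G=(V,E)$ be their product: $V=V_1\times V_2$, and $((v,u),(v',u'))\in E$ iff $(v,v')\in E_1$ and $(u,u')\in E_2$. For $e'=((v,u),(v',u'))\in E$ write $e'_1=(v,v')$. Let $P=(\pi,Q)$ be a stationary Markov chain on $G$ and $P_1=(\pi_1,Q_1)$ a stationary Markov chain on $G_1$. Suppose that (i) for all $e\in E_1$, $P_1(e)=\sum_{e'\in E,\ e'_1=e}P(e')$; and (ii) for all $u_0\in V_2$ and $v_0,v_1\in V_1$, $\sum_{u_1\in V_2}Q\big((v_1,u_1)\mid(v_0,u_0)\big)=Q_1(v_1\mid v_0)$. Then the $G_1$-marginal of the Markov process $\hat P$ equals the Markov process $\hat P_1$.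
   Context: A stationary Markov chain on a finite directed graph $H=(W,F)$ is a probability measure $P$ on $F$ such that for every vertex $w$, $\pi(w):=\sum_{e:\sigma(e)=w}P(e)=\sum_{e:\tau(e)=w}P(e)$, with $\pi(w)>0$ for all $w$ (no degenerate vertices); here $\sigma(e),\tau(e)$ are the source and target of $e$. The transition probabilities are $Q(e)=P(e)/\pi(\sigma(e))$; for a simple graph and $e=(w,w')$ one writes $Q(w'\mid w)=Q(e)$, and $Q(w'\mid w)=0$ if $(w,w')\notin F$. The pair is denoted $P=(\pi,Q)$. The induced stationary Markov process $\hat P$ is the probability measure on the space of bi-infinite paths $(e_i)_{i\in\mathbb{Z}}$ in $H$ (with $\tau(e_i)=\sigma(e_{i+1})$) determined by $\hat P(\{(e_i): e_0\cdots e_{n-1}=f_0\cdots f_{n-1}\})=P(f_0)\prod_{i=1}^{n-1}Q(f_i)$ for every finite path $f_0\cdots f_{n-1}$. The $G_1$-marginal of $\hat P$ is its pushforward under the map sending a bi-infinite path $(((v_i,u_i),(v_{i+1},u_{i+1})))_i$ in $G$ to the path $((v_i,v_{i+1}))_i$ in $G_1$. *)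

theory Defs
  imports "HOL-Probability.Probability"
begin

definition simple_digraph :: "'v set \<Rightarrow> ('v \<times> 'v) set \<Rightarrow> bool" where
  "simple_digraph V E \<longleftrightarrow> finite V \<and> E \<subseteq> V \<times> V \<and> (\<forall>v. (v, v) \<notin> E)"

definition prod_edges :: "('a \<times> 'a) set \<Rightarrow> ('b \<times> 'b) set \<Rightarrow> (('a \<times> 'b) \<times> ('a \<times> 'b)) set" where
  "prod_edges E1 E2 = {((v, u), (v', u')). (v, v') \<in> E1 \<and> (u, u') \<in> E2}"

definition edge1 :: "(('a \<times> 'b) \<times> ('a \<times> 'b)) \<Rightarrow> ('a \<times> 'a)" where
  "edge1 e = (fst (fst e), fst (snd e))"

definition pi_out :: "('v \<times> 'v) set \<Rightarrow> (('v \<times> 'v) \<Rightarrow> real) \<Rightarrow> 'v \<Rightarrow> real" where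
  "pi_out E P w = (\<Sum>e\<in>{e\<in>E. fst e = w}. P e)"

definition pi_in :: "('v \<times> 'v) set \<Rightarrow> (('v \<times> 'v) \<Rightarrow> real) \<Rightarrow> 'v \<Rightarrow> real" where
  "pi_in E P w = (\<Sum>e\<in>{e\<in>E. snd e = w}. P e)"

text \<open>Stationary Markov chain on (V,E): a probability measure on E (given by its
  values on E) with in-flow = out-flow = \<pi>(w) > 0 at every vertex.\<close>
definition stationary_mc :: "'v set \<Rightarrow> ('v \<times> 'v) set \<Rightarrow> (('v \<times> 'v) \<Rightarrow> real) \<Rightarrow> bool" where
  "stationary_mc V E P \<longleftrightarrow>
     (\<forall>e\<in>E. P e \<ge> 0) \<and> (\<Sum>e\<in>E. P e) = 1 \<and>
     (\<forall>w\<in>V. pi_out E P w = pi_in E P w \<and> pi_out E P w > 0)"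

definition trans :: "('v \<times> 'v) set \<Rightarrow> (('v \<times> 'v) \<Rightarrow> real) \<Rightarrow> ('v \<times> 'v) \<Rightarrow> real" where
  "trans E P e = P e / pi_out E P (fst e)"

definition trans_prob :: "('v \<times> 'v) set \<Rightarrow> (('v \<times> 'v) \<Rightarrow> real) \<Rightarrow> 'v \<Rightarrow> 'v \<Rightarrow> real" where
  "trans_prob E P w w' = (if (w, w') \<in> E then trans E P (w, w') else 0)"

definition is_path :: "('v \<times> 'v) set \<Rightarrow> nat \<Rightarrow> (nat \<Rightarrow> ('v \<times> 'v)) \<Rightarrow> bool" where
  "is_path E n f \<longleftrightarrow> (\<forall>i<n. f i \<in> E) \<and> (\<forall>i. Suc i < n \<longrightarrow> snd (f i) = fst (f (Suc i)))"

definition seq_space :: "(int \<Rightarrow> 'e) measure" where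
  "seq_space = PiM UNIV (\<lambda>_. count_space UNIV)"

definition markov_process ::
  "'v set \<Rightarrow> ('v \<times> 'v) set \<Rightarrow> (('v \<times> 'v) \<Rightarrow> real) \<Rightarrow> (int \<Rightarrow> ('v \<times> 'v)) measure \<Rightarrow> bool" where
  "markov_process V E P M \<longleftrightarrow>
     prob_space M \<and> sets M = sets seq_space \<and>
     (\<forall>k n f. n \<ge> 1 \<longrightarrow> is_path E n f \<longrightarrow>
        measure M {\<omega> \<in> space M. \<forall>i<n. \<omega> (k + int i) = f i}
          = P (f 0) * (\<Prod>i\<in>{1..<n}. trans E P (f i)))"

definition marg1 :: "(int \<Rightarrow> (('a \<times> 'b) \<times> ('a \<times> 'b))) \<Rightarrow> (int \<Rightarrow> ('a \<times> 'a))" where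
  "marg1 \<omega> = (\<lambda>i. edge1 (\<omega> i))"

end

theory Submission
  imports Defs
begin


lemma space_seq: "space (seq_space :: (int \<Rightarrow> 'e) measure) = UNIV"
  by (simp add: seq_space_def space_PiM)

lemma sets_coord: "{\<omega>. \<omega> j \<in> A} \<in> sets (seq_space :: (int \<Rightarrow> 'e) measure)"
proof -
  have "(\<lambda>\<omega>::int\<Rightarrow>'e. \<omega> j) \<in> measurable seq_space (count_space UNIV)"
    unfolding seq_space_def by (rule measurable_component_singleton) simp
  then have "(\<lambda>\<omega>. \<omega> j) -` A \<inter> space seq_space \<in> sets seq_space" by (rule measurable_sets) simp
  then show ?thesis by (simp add: space_seq vimage_def)
qed

lemma sets_cylS: "finite S \<Longrightarrow> {\<omega>. \<forall>i\<in>S. \<omega> (h i) \<in> X i} \<in> sets (seq_space :: (int \<Rightarrow> 'e) measure)"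
  using sets.sets_Collect_finite_All[where M=seq_space and S=S and P="\<lambda>i \<omega>. \<omega> (h i) \<in> X i"]
  by (simp add: space_seq sets_coord)

lemma sets_cyl: "{\<omega>. \<forall>i<(n::nat). \<omega> (h i) \<in> X i} \<in> sets (seq_space :: (int \<Rightarrow> 'e) measure)"
proof -
  have eq: "{\<omega>. \<forall>i<n. \<omega> (h i) \<in> X i} = {\<omega>. \<forall>i\<in>{..<n}. \<omega> (h i) \<in> X i}" by auto
  show ?thesis by (subst eq, rule sets_cylS) simp
qed

lemma (in finite_measure) decomp:
  assumes "finite J" "\<And>j. j \<in> J \<Longrightarrow> B j \<in> sets M" "disjoint_family_on B J"
    "\<And>j. j \<in> J \<Longrightarrow> B j \<subseteq> A" "A \<in> sets M" "A \<subseteq> (\<Union>j\<in>J. B j) \<union> Z"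
    "Z \<in> sets M" "measure M Z = 0"
  shows "measure M A = (\<Sum>j\<in>J. measure M (B j))"
proof -
  have U: "(\<Union>j\<in>J. B j) \<in> sets M" using assms by auto
  have "measure M A \<le> measure M ((\<Union>j\<in>J. B j) \<union> Z)"
    using assms U by (intro finite_measure_mono) auto
  also have "\<dots> = measure M (\<Union>j\<in>J. B j)"
    using assms U by (intro measure_zero_union) auto
  finally have 1: "measure M A \<le> measure M (\<Union>j\<in>J. B j)" .
  have 2: "measure M (\<Union>j\<in>J. B j) \<le> measure M A"
    using assms by (intro finite_measure_mono) auto
  have "measure M (\<Union>j\<in>J. B j) = (\<Sum>j\<in>J. measure M (B j))"
    using assms by (intro finite_measure_finite_Union) auto
  with 1 2 show ?thesis by linarith
qed

definition cw :: "('v \<times> 'v) set \<Rightarrow> (('v \<times> 'v) \<Rightarrow> real) \<Rightarrow> nat \<Rightarrow> (nat \<Rightarrow> ('v \<times> 'v)) \<Rightarrow> real" where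
  "cw E P n g = (if is_path E n g then P (g 0) * (\<Prod>i\<in>{1..<n}. trans E P (g i)) else 0)"

locale mcp =
  fixes V :: "'v set" and E :: "('v \<times> 'v) set" and P :: "('v \<times> 'v) \<Rightarrow> real"
    and N :: "(int \<Rightarrow> ('v \<times> 'v)) measure"
  assumes mp: "markov_process V E P N" and st: "stationary_mc V E P"
    and finE: "finite E" and EV: "E \<subseteq> V \<times> V"
begin

sublocale prob_space N using mp by (simp add: markov_process_def)

lemma setsN: "sets N = sets seq_space" using mp by (simp add: markov_process_def)

lemma spaceN: "space N = UNIV"
  using sets_eq_imp_space_eq[OF setsN] by (simp add: space_seq)

lemma cylN: "{\<omega>. \<forall>i<(n::nat). \<omega> (h i) \<in> X i} \<in> sets N"
  using sets_cyl by (simp add: setsN)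

lemma coordN: "{\<omega>. \<omega> j \<in> A} \<in> sets N"
  using sets_coord by (simp add: setsN)

lemma coordN': "{\<omega>. \<omega> j = a} \<in> sets N"
  using coordN[of j "{a}"] by simp

lemma mpc: "n \<ge> 1 \<Longrightarrow> is_path E n f \<Longrightarrow>
   measure N {\<omega>. \<forall>i<n. \<omega> (k + int i) = f i} = P (f 0) * (\<Prod>i\<in>{1..<n}. trans E P (f i))"
  using mp unfolding markov_process_def by (simp add: spaceN)

lemma cyl1: "e \<in> E \<Longrightarrow> measure N {\<omega>. \<omega> m = e} = P e"
  using mpc[of 1 "\<lambda>_. e" m] by (simp add: is_path_def)

lemma cyl2: "e \<in> E \<Longrightarrow> e' \<in> E \<Longrightarrow> snd e = fst e' \<Longrightarrow>
   measure N {\<omega>. \<omega> m = e \<and> \<omega> (m + 1) = e'} = P e * trans E P e'"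
proof -
  assume a: "e \<in> E" "e' \<in> E" "snd e = fst e'"
  define f where "f = (\<lambda>i::nat. if i = 0 then e else e')"
  have two: "\<And>Q. (\<forall>i<(2::nat). Q i) \<longleftrightarrow> Q 0 \<and> Q 1"
    by (auto simp: numeral_2_eq_2 less_Suc_eq)
  have p: "is_path E 2 f" unfolding is_path_def f_def using a two by auto
  have "{\<omega>. \<forall>i<2. \<omega> (m + int i) = f i} = {\<omega>. \<omega> m = e \<and> \<omega> (m + 1) = e'}"
    unfolding two f_def by simp
  moreover have "{1..<2::nat} = {1}" by auto
  ultimately show ?thesis using mpc[OF _ p, of m] by (simp add: f_def)
qed

lemma null: "measure N {\<omega>. \<omega> m \<notin> E} = 0"
proof -
  have "measure N {\<omega>. \<omega> m \<in> E} = (\<Sum>e\<in>E. measure N {\<omega>. \<omega> m \<in> {e}})"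
    by (rule decomp[where Z="{}"]) (auto simp: finE coordN coordN' disjoint_family_on_def)
  also have "\<dots> = (\<Sum>e\<in>E. P e)" using cyl1 by simp
  also have "\<dots> = 1" using st by (simp add: stationary_mc_def)
  finally have 1: "measure N {\<omega>. \<omega> m \<in> E} = 1" .
  have "measure N (space N - {\<omega>. \<omega> m \<in> E}) = measure N (space N) - measure N {\<omega>. \<omega> m \<in> E}"
    by (rule finite_measure_compl) (rule coordN)
  moreover have "space N - {\<omega>. \<omega> m \<in> E} = {\<omega>. \<omega> m \<notin> E}" by (auto simp: spaceN)
  ultimately show ?thesis using 1 prob_space by simp
qed

end



context mcp begin

lemma coordN'': "{\<omega>. \<omega> j \<notin> A} \<in> sets N"
  using coordN[of j "- A"] by simp

lemma badpair:
  assumes e: "e \<in> E" and e': "e' \<in> E" and ne: "snd e \<noteq> fst e'"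
  shows "measure N {\<omega>. \<omega> m = e \<and> \<omega> (m + 1) = e'} = 0"
proof -
  define B where "B = (\<lambda>x. {\<omega>. \<omega> m = e \<and> \<omega> (m + 1) = x})"
  have Bs: "B x \<in> sets N" for x
  proof -
    have "B x = {\<omega>. \<omega> m = e} \<inter> {\<omega>. \<omega> (m+1) = x}" by (auto simp: B_def)
    then show ?thesis using coordN' by simp
  qed
  have "P e = measure N {\<omega>. \<omega> m = e}" using cyl1 e by simp
  also have "\<dots> = (\<Sum>x\<in>E. measure N (B x))"
    by (rule decomp[where Z="{\<omega>. \<omega> (m+1) \<notin> E}"])
       (use Bs[unfolded B_def] in \<open>auto simp: finE coordN'' coordN' null disjoint_family_on_def B_def\<close>)
  finally have tot: "P e = (\<Sum>x\<in>E. measure N (B x))" .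
  define G where "G = {x\<in>E. fst x = snd e}"
  define Bd where "Bd = {x\<in>E. fst x \<noteq> snd e}"
  have EGB: "E = G \<union> Bd" "G \<inter> Bd = {}" "finite G" "finite Bd"
    using finE by (auto simp: G_def Bd_def)
  have "(\<Sum>x\<in>E. measure N (B x)) = (\<Sum>x\<in>G. measure N (B x)) + (\<Sum>x\<in>Bd. measure N (B x))"
    using EGB by (metis sum.union_disjoint)
  moreover have "(\<Sum>x\<in>G. measure N (B x)) = (\<Sum>x\<in>G. P e * trans E P x)"
    by (rule sum.cong) (auto simp: G_def B_def cyl2 e)
  moreover have "(\<Sum>x\<in>G. trans E P x) = 1"
  proof -
    have sv: "snd e \<in> V" using e EV by auto
    have pos: "pi_out E P (snd e) > 0" using st sv unfolding stationary_mc_def by blast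
    have "(\<Sum>x\<in>G. trans E P x) = (\<Sum>x\<in>G. P x / pi_out E P (snd e))"
      by (rule sum.cong) (auto simp: G_def trans_def)
    also have "\<dots> = (\<Sum>x\<in>G. P x) / pi_out E P (snd e)" by (simp add: sum_divide_distrib)
    also have "(\<Sum>x\<in>G. P x) = pi_out E P (snd e)" by (simp add: pi_out_def G_def)
    finally show ?thesis using pos by simp
  qed
  ultimately have "(\<Sum>x\<in>Bd. measure N (B x)) = 0" using tot
    by (simp add: sum_distrib_left[symmetric])
  then have "\<forall>x\<in>Bd. measure N (B x) = 0"
    using EGB by (subst (asm) sum_nonneg_eq_0_iff) auto
  moreover have "e' \<in> Bd" using e' ne by (auto simp: Bd_def)
  ultimately show ?thesis by (simp add: B_def)
qed

lemma cyl:
  assumes n: "n \<ge> 1"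
  shows "measure N {\<omega>. \<forall>i<n. \<omega> (k + int i) \<in> X i}
     = (\<Sum>g\<in>PiE {..<n} (\<lambda>i. X i \<inter> E). cw E P n g)"
proof -
  define J where "J = PiE {..<n} (\<lambda>i. X i \<inter> E)"
  define pc where "pc = (\<lambda>g::nat \<Rightarrow> 'v \<times> 'v. {\<omega>. \<forall>i<n. \<omega> (k + int i) = g i})"
  define Z where "Z = (\<Union>i\<in>{..<n}. {\<omega>. \<omega> (k + int i) \<notin> E})"
  have finJ: "finite J" unfolding J_def using finE by (intro finite_PiE) auto
  have pcs: "pc g \<in> sets N" for g
    using cylN[of n "\<lambda>i. k + int i" "\<lambda>i. {g i}"] by (simp add: pc_def)
  have Zs: "Z \<in> sets N" unfolding Z_def using coordN'' by auto
  have Z0: "measure N Z = 0"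
  proof -
    have "measure N Z \<le> (\<Sum>i\<in>{..<n}. measure N {\<omega>. \<omega> (k + int i) \<notin> E})"
      unfolding Z_def using coordN'' by (intro finite_measure_subadditive_finite) auto
    also have "\<dots> = 0" using null by simp
    finally show ?thesis using measure_nonneg[of N Z] by linarith
  qed
  have "measure N {\<omega>. \<forall>i<n. \<omega> (k + int i) \<in> X i} = (\<Sum>g\<in>J. measure N (pc g))"
  proof (rule decomp[where Z=Z])
    show "disjoint_family_on pc J"
      unfolding disjoint_family_on_def
    proof (intro ballI impI)
      fix g g' assume g: "g \<in> J" "g' \<in> J" "g \<noteq> g'"
      show "pc g \<inter> pc g' = {}"
      proof (rule ccontr)
        assume "pc g \<inter> pc g' \<noteq> {}"
        then obtain \<omega> where "\<omega> \<in> pc g" "\<omega> \<in> pc g'" by blast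
        then have "\<And>i. i \<in> {..<n} \<Longrightarrow> g i = g' i" by (auto simp: pc_def)
        then have "g = g'" using g unfolding J_def by (intro PiE_ext) auto
        with g show False by simp
      qed
    qed
    show "{\<omega>. \<forall>i<n. \<omega> (k + int i) \<in> X i} \<subseteq> (\<Union>g\<in>J. pc g) \<union> Z"
    proof
      fix \<omega> assume w: "\<omega> \<in> {\<omega>. \<forall>i<n. \<omega> (k + int i) \<in> X i}"
      show "\<omega> \<in> (\<Union>g\<in>J. pc g) \<union> Z"
      proof (cases "\<forall>i<n. \<omega> (k + int i) \<in> E")
        case True
        define g where "g = restrict (\<lambda>i. \<omega> (k + int i)) {..<n}"
        have "g \<in> J" using w True by (auto simp: g_def J_def)
        moreover have "\<omega> \<in> pc g" by (auto simp: pc_def g_def)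
        ultimately show ?thesis by blast
      next
        case False
        then show ?thesis by (auto simp: Z_def)
      qed
    qed
    show "finite J" by (rule finJ)
    show "\<And>g. g \<in> J \<Longrightarrow> pc g \<in> sets N" by (rule pcs)
    show "\<And>g. g \<in> J \<Longrightarrow> pc g \<subseteq> {\<omega>. \<forall>i<n. \<omega> (k + int i) \<in> X i}"
      by (auto simp: pc_def J_def PiE_iff)
    show "{\<omega>. \<forall>i<n. \<omega> (k + int i) \<in> X i} \<in> sets N" by (rule cylN)
    show "Z \<in> sets N" by (rule Zs)
    show "measure N Z = 0" by (rule Z0)
  qed
  also have "\<dots> = (\<Sum>g\<in>J. cw E P n g)"
  proof (rule sum.cong[OF refl])
    fix g assume g: "g \<in> J"
    then have gE: "\<And>i. i < n \<Longrightarrow> g i \<in> E" by (auto simp: J_def)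
    show "measure N (pc g) = cw E P n g"
    proof (cases "is_path E n g")
      case True
      then show ?thesis using mpc[OF n True, of k] by (simp add: cw_def pc_def)
    next
      case False
      then obtain j where j: "Suc j < n" "snd (g j) \<noteq> fst (g (Suc j))"
        using gE by (auto simp: is_path_def)
      have "pc g \<subseteq> {\<omega>. \<omega> (k + int j) = g j \<and> \<omega> (k + int j + 1) = g (Suc j)}"
      proof
        fix \<omega> assume "\<omega> \<in> pc g"
        then have h: "\<forall>i<n. \<omega> (k + int i) = g i" by (simp add: pc_def)
        have eq: "k + int (Suc j) = k + int j + 1" by simp
        from h j(1) have "\<omega> (k + int (Suc j)) = g (Suc j)" by blast
        then have "\<omega> (k + int j + 1) = g (Suc j)" by (simp only: eq)
        moreover from h j(1) have "\<omega> (k + int j) = g j" by simp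
        ultimately show "\<omega> \<in> {\<omega>. \<omega> (k + int j) = g j \<and> \<omega> (k + int j + 1) = g (Suc j)}" by simp
      qed
      then have "measure N (pc g) \<le> measure N {\<omega>. \<omega> (k + int j) = g j \<and> \<omega> (k + int j + 1) = g (Suc j)}"
      proof (rule finite_measure_mono)
        have "{\<omega>. \<omega> (k + int j) = g j \<and> \<omega> (k + int j + 1) = g (Suc j)} = {\<omega>. \<omega> (k + int j) = g j} \<inter> {\<omega>. \<omega> (k + int j + 1) = g (Suc j)}" by auto
        then show "{\<omega>. \<omega> (k + int j) = g j \<and> \<omega> (k + int j + 1) = g (Suc j)} \<in> sets N"
          using coordN' by simp
      qed
      also have "\<dots> = 0" using j gE by (intro badpair) auto
      finally show ?thesis using measure_nonneg[of N "pc g"] False by (simp add: cw_def)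
    qed
  qed
  finally show ?thesis by (simp add: J_def)
qed

end



lemma mp_unique:
  fixes N1 N2 :: "(int \<Rightarrow> ('v \<times> 'v)) measure"
  assumes m1: "markov_process V E P N1" and m2: "markov_process V E P N2"
    and st: "stationary_mc V E P" and finE: "finite E" and EV: "E \<subseteq> V \<times> V"
  shows "N1 = N2"
proof -
  interpret a: mcp V E P N1 using assms by unfold_locales
  interpret b: mcp V E P N2 using assms by unfold_locales
  show ?thesis
  proof (rule measure_eqI_PiM_infinite[where I=UNIV and M="\<lambda>_. count_space UNIV"])
    show "sets N1 = sets (PiM UNIV (\<lambda>_. count_space UNIV))" using a.setsN by (simp add: seq_space_def)
    show "sets N2 = sets (PiM UNIV (\<lambda>_. count_space UNIV))" using b.setsN by (simp add: seq_space_def)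
    show "finite_measure N1" using a.emeasure_space_1 by (intro finite_measureI) auto
  next
    fix A :: "int \<Rightarrow> ('v \<times> 'v) set" and J :: "int set"
    assume J: "finite J"
    have S: "prod_emb UNIV (\<lambda>_. count_space UNIV) J (PiE J A) = {\<omega>. \<forall>j\<in>J. \<omega> j \<in> A j}"
      by (auto simp: prod_emb_def PiE_iff)
    define m where "m = Max (insert 0 (abs ` J))"
    have mj: "\<And>j. j \<in> J \<Longrightarrow> \<bar>j\<bar> \<le> m" unfolding m_def using J by (intro Max_ge) auto
    have m0: "0 \<le> m" unfolding m_def using J by (intro Max_ge) auto
    define n where "n = nat (2 * m + 1)"
    define k where "k = - m"
    define X where "X = (\<lambda>i::nat. if k + int i \<in> J then A (k + int i) else UNIV)"
    have n1: "n \<ge> 1" using m0 by (simp add: n_def)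
    have S2: "{\<omega>. \<forall>j\<in>J. \<omega> j \<in> A j} = {\<omega>. \<forall>i<n. \<omega> (k + int i) \<in> X i}"
    proof (intro set_eqI iffI; simp)
      fix \<omega> assume h: "\<forall>j\<in>J. \<omega> j \<in> A j"
      then show "\<forall>i<n. \<omega> (k + int i) \<in> X i" by (auto simp: X_def)
    next
      fix \<omega> assume h: "\<forall>i<n. \<omega> (k + int i) \<in> X i"
      show "\<forall>j\<in>J. \<omega> j \<in> A j"
      proof
        fix j assume j: "j \<in> J"
        define i where "i = nat (j - k)"
        have "k + int i = j" "i < n" using mj[OF j] by (auto simp: i_def k_def n_def)
        then show "\<omega> j \<in> A j" using h j by (auto simp: X_def)
      qed
    qed
    show "emeasure N1 (prod_emb UNIV (\<lambda>_. count_space UNIV) J (PiE J A)) =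
          emeasure N2 (prod_emb UNIV (\<lambda>_. count_space UNIV) J (PiE J A))"
      unfolding S S2 a.emeasure_eq_measure b.emeasure_eq_measure a.cyl[OF n1] b.cyl[OF n1] ..
  qed
qed

lemma is_path_Suc: "is_path E (Suc n) g \<longleftrightarrow> is_path E n g \<and> g n \<in> E \<and> (n \<ge> 1 \<longrightarrow> snd (g (n-1)) = fst (g n))"
proof
  assume "is_path E (Suc n) g" then show "is_path E n g \<and> g n \<in> E \<and> (n \<ge> 1 \<longrightarrow> snd (g (n-1)) = fst (g n))"
    unfolding is_path_def by (metis One_nat_def Suc_less_eq Suc_pred less_Suc_eq less_Suc_eq_le)
next
  assume h: "is_path E n g \<and> g n \<in> E \<and> (n \<ge> 1 \<longrightarrow> snd (g (n-1)) = fst (g n))"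
  show "is_path E (Suc n) g" unfolding is_path_def
  proof (intro conjI allI impI)
    fix i assume "i < Suc n" then show "g i \<in> E" using h by (auto simp: is_path_def less_Suc_eq)
  next
    fix i assume i: "Suc i < Suc n"
    show "snd (g i) = fst (g (Suc i))"
    proof (cases "Suc i = n")
      case True then show ?thesis using h by auto
    next
      case False then show ?thesis using h i by (auto simp: is_path_def)
    qed
  qed
qed

lemma is_path_cong: "(\<And>i. i < n \<Longrightarrow> g i = h i) \<Longrightarrow> is_path E n g = is_path E n h"
  unfolding is_path_def by (metis Suc_lessD)

lemma sum_PiE_Suc:
  "sum F (PiE {..<Suc n} L) = (\<Sum>y\<in>L n. \<Sum>h\<in>PiE {..<n} L. F (h(n:=y)))"
proof -
  have eq: "PiE {..<Suc n} L = (\<lambda>(y,g). g(n:=y)) ` (L n \<times> PiE {..<n} L)"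
    using PiE_insert_eq[of n "{..<n}" L] by (simp add: lessThan_Suc)
  have inj: "inj_on (\<lambda>(y,g). g(n:=y)) (L n \<times> PiE {..<n} L)"
    by (rule inj_combinator) simp
  have "sum F (PiE {..<Suc n} L) = (\<Sum>(y,h)\<in>L n \<times> PiE {..<n} L. F (h(n:=y)))"
    unfolding eq by (subst sum.reindex[OF inj]) (simp add: case_prod_unfold comp_def)
  also have "\<dots> = (\<Sum>y\<in>L n. \<Sum>h\<in>PiE {..<n} L. F (h(n:=y)))"
    by (rule sum.cartesian_product[symmetric])
  finally show ?thesis .
qed




lemma keyK:
  fixes E1 :: "('a \<times> 'a) set" and E2 :: "('b \<times> 'b) set"
    and P :: "(('a \<times> 'b) \<times> ('a \<times> 'b)) \<Rightarrow> real"
    and P1 :: "('a \<times> 'a) \<Rightarrow> real"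
  assumes G1: "simple_digraph V1 E1" and G2: "simple_digraph V2 E2"
    and ii: "\<forall>u0\<in>V2. \<forall>v0\<in>V1. \<forall>v1\<in>V1.
              (\<Sum>u1\<in>V2. trans_prob (prod_edges E1 E2) P (v0, u0) (v1, u1))
                = trans_prob E1 P1 v0 v1"
    and ab: "(a, b) \<in> E1" and u: "u \<in> V2"
  shows "(\<Sum>y\<in>{e. edge1 e = (a, b)} \<inter> prod_edges E1 E2.
            if (a, u) = fst y then trans (prod_edges E1 E2) P y else 0) = trans E1 P1 (a, b)"
proof -
  let ?Ep = "prod_edges E1 E2"
  have fin: "finite V1" "finite V2" "E1 \<subseteq> V1 \<times> V1" "E2 \<subseteq> V2 \<times> V2"
    using G1 G2 by (auto simp: simple_digraph_def)
  have finEp: "finite ?Ep"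
  proof (rule finite_subset)
    show "?Ep \<subseteq> (V1 \<times> V2) \<times> (V1 \<times> V2)" using fin by (auto simp: prod_edges_def)
  qed (use fin in auto)
  have abV: "a \<in> V1" "b \<in> V1" using ab fin by auto
  have "(\<Sum>y\<in>{e. edge1 e = (a, b)} \<inter> ?Ep. if (a, u) = fst y then trans ?Ep P y else 0)
      = (\<Sum>y\<in>{y\<in>{e. edge1 e = (a, b)} \<inter> ?Ep. (a, u) = fst y}. trans ?Ep P y)"
    by (rule sum.inter_filter[symmetric]) (use finEp in auto)
  also have "\<dots> = (\<Sum>u1\<in>{u1\<in>V2. (u, u1) \<in> E2}. trans ?Ep P ((a, u), (b, u1)))"
  proof (rule sum.reindex_cong[where l="\<lambda>u1. ((a, u), (b, u1))"])
    show "inj_on (\<lambda>u1. ((a, u), (b, u1))) {u1\<in>V2. (u, u1) \<in> E2}" by (auto simp: inj_on_def)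
    show "{y\<in>{e. edge1 e = (a, b)} \<inter> ?Ep. (a, u) = fst y} = (\<lambda>u1. ((a, u), (b, u1))) ` {u1\<in>V2. (u, u1) \<in> E2}"
    proof (intro set_eqI iffI)
      fix y assume y: "y \<in> {y\<in>{e. edge1 e = (a, b)} \<inter> ?Ep. (a, u) = fst y}"
      obtain x1 x2 x3 x4 where yx: "y = ((x1, x2), (x3, x4))" by (metis prod.collapse)
      have y3: "edge1 y = (a, b)" "y \<in> ?Ep" "(a, u) = fst y" using y by auto
      have "x1 = a" "x3 = b" using y3(1) yx by (simp_all add: edge1_def)
      moreover have "x2 = u" using y3(3) yx by simp
      moreover have "(x2, x4) \<in> E2" using y3(2) yx by (simp add: prod_edges_def)
      ultimately have "x1 = a" "x2 = u" "x3 = b" "(u, x4) \<in> E2" by auto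
      then have "x4 \<in> {u1\<in>V2. (u, u1) \<in> E2}" "y = ((a, u), (b, x4))" using fin yx by auto
      then show "y \<in> (\<lambda>u1. ((a, u), (b, u1))) ` {u1\<in>V2. (u, u1) \<in> E2}" by blast
    next
      fix y assume "y \<in> (\<lambda>u1. ((a, u), (b, u1))) ` {u1\<in>V2. (u, u1) \<in> E2}"
      then show "y \<in> {y\<in>{e. edge1 e = (a, b)} \<inter> ?Ep. (a, u) = fst y}"
        using ab by (auto simp: edge1_def prod_edges_def)
    qed
  qed simp
  also have "\<dots> = (\<Sum>u1\<in>V2. if (u, u1) \<in> E2 then trans ?Ep P ((a, u), (b, u1)) else 0)"
    by (rule sum.inter_filter) (use fin in auto)
  also have "\<dots> = (\<Sum>u1\<in>V2. trans_prob ?Ep P (a, u) (b, u1))"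
    by (rule sum.cong) (use ab in \<open>auto simp: trans_prob_def prod_edges_def\<close>)
  also have "\<dots> = trans_prob E1 P1 a b" using ii u abV by blast
  also have "\<dots> = trans E1 P1 (a, b)" using ab by (simp add: trans_prob_def)
  finally show ?thesis .
qed

lemma comb:
  fixes E1 :: "('a \<times> 'a) set" and E2 :: "('b \<times> 'b) set"
    and P :: "(('a \<times> 'b) \<times> ('a \<times> 'b)) \<Rightarrow> real"
    and P1 :: "('a \<times> 'a) \<Rightarrow> real"
  assumes G1: "simple_digraph V1 E1" and G2: "simple_digraph V2 E2"
    and i: "\<forall>e\<in>E1. P1 e = (\<Sum>e'\<in>{e'\<in>prod_edges E1 E2. edge1 e' = e}. P e')"
    and ii: "\<forall>u0\<in>V2. \<forall>v0\<in>V1. \<forall>v1\<in>V1.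
              (\<Sum>u1\<in>V2. trans_prob (prod_edges E1 E2) P (v0, u0) (v1, u1))
                = trans_prob E1 P1 v0 v1"
  shows "n \<ge> 1 \<Longrightarrow> is_path E1 n f \<Longrightarrow>
    (\<Sum>g\<in>PiE {..<n} (\<lambda>i. {e. edge1 e = f i} \<inter> prod_edges E1 E2). cw (prod_edges E1 E2) P n g)
      = P1 (f 0) * (\<Prod>i\<in>{1..<n}. trans E1 P1 (f i))"
proof (induction n)
  case 0 then show ?case by simp
next
  case (Suc n)
  let ?Ep = "prod_edges E1 E2"
  define L where "L = (\<lambda>i. {e. edge1 e = f i} \<inter> ?Ep)"
  have fin: "E2 \<subseteq> V2 \<times> V2" using G2 by (auto simp: simple_digraph_def)
  show ?case
  proof (cases "n = 0")
    case True
    have f0: "f 0 \<in> E1" using Suc.prems True by (simp add: is_path_def)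
    have "(\<Sum>g\<in>PiE {..<Suc 0} L. cw ?Ep P (Suc 0) g) = (\<Sum>y\<in>L 0. P y)"
      by (simp add: sum_PiE_Suc cw_def is_path_def L_def)
    also have "L 0 = {e'\<in>?Ep. edge1 e' = f 0}" by (auto simp: L_def)
    also have "(\<Sum>y\<in>{e'\<in>?Ep. edge1 e' = f 0}. P y) = P1 (f 0)" using i f0 by simp
    finally show ?thesis using True by (simp add: L_def)
  next
    case False
    then have n1: "n \<ge> 1" by simp
    have pn: "is_path E1 n f" and fn: "f n \<in> E1" and con: "snd (f (n-1)) = fst (f n)"
      using Suc.prems(2) n1 by (auto simp: is_path_Suc)
    have IH: "(\<Sum>h\<in>PiE {..<n} L. cw ?Ep P n h) = P1 (f 0) * (\<Prod>i\<in>{1..<n}. trans E1 P1 (f i))"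
      using Suc.IH[OF n1 pn] by (simp add: L_def)
    have step: "cw ?Ep P (Suc n) (h(n:=y)) = cw ?Ep P n h * (if snd (h (n-1)) = fst y then trans ?Ep P y else 0)"
      if h: "h \<in> PiE {..<n} L" and y: "y \<in> L n" for h y
    proof -
      have yE: "y \<in> ?Ep" using y by (simp add: L_def)
      have pc: "is_path ?Ep n (h(n:=y)) = is_path ?Ep n h" by (rule is_path_cong) simp
      have "n - 1 \<noteq> n" using n1 by arith
      then have hn: "(h(n:=y)) (n-1) = h (n-1)" by simp
      have p: "is_path ?Ep (Suc n) (h(n:=y)) \<longleftrightarrow> is_path ?Ep n h \<and> snd (h (n-1)) = fst y"
        unfolding is_path_Suc pc hn using n1 yE by simp
      have pr: "(\<Prod>i\<in>{1..<Suc n}. trans ?Ep P ((h(n:=y)) i)) = (\<Prod>i\<in>{1..<n}. trans ?Ep P (h i)) * trans ?Ep P y"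
      proof -
        have "(\<Prod>i\<in>{1..<Suc n}. trans ?Ep P ((h(n:=y)) i)) = (\<Prod>i\<in>{1..<n}. trans ?Ep P ((h(n:=y)) i)) * trans ?Ep P ((h(n:=y)) n)"
          using n1 by (rule prod.atLeastLessThan_Suc)
        also have "(\<Prod>i\<in>{1..<n}. trans ?Ep P ((h(n:=y)) i)) = (\<Prod>i\<in>{1..<n}. trans ?Ep P (h i))"
          by (rule prod.cong) auto
        finally show ?thesis by simp
      qed
      have h0: "(h(n:=y)) 0 = h 0" using n1 by simp
      show ?thesis unfolding cw_def p pr h0 by simp
    qed
    have inner: "(\<Sum>y\<in>L n. if snd (h (n-1)) = fst y then trans ?Ep P y else 0) = trans E1 P1 (f n)"
      if h: "h \<in> PiE {..<n} L" for h
    proof -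
      have "n - 1 \<in> {..<n}" using n1 by simp
      with h have "h (n-1) \<in> L (n-1)" by (rule PiE_mem)
      then have hl: "edge1 (h (n-1)) = f (n-1)" "h (n-1) \<in> ?Ep" by (auto simp: L_def)
      obtain a0 u0 a1 u1 where hx: "h (n-1) = ((a0, u0), (a1, u1))" by (metis prod.collapse)
      have "((a0, u0), (a1, u1)) \<in> ?Ep" using hl(2) hx by simp
      then have "(u0, u1) \<in> E2" by (simp add: prod_edges_def)
      then have u1a: "u1 \<in> V2" using fin by blast
      have "(a0, a1) = f (n-1)" using hl(1) hx by (simp add: edge1_def)
      then have "a1 = fst (f n)" using con by (metis snd_conv)
      note u1 = u1a this
      have "(\<Sum>y\<in>L n. if snd (h (n-1)) = fst y then trans ?Ep P y else 0)
         = (\<Sum>y\<in>{e. edge1 e = (fst (f n), snd (f n))} \<inter> ?Ep. if (fst (f n), u1) = fst y then trans ?Ep P y else 0)"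
        unfolding L_def hx snd_conv u1(2) by simp
      also have "\<dots> = trans E1 P1 (fst (f n), snd (f n))"
        by (rule keyK[OF G1 G2 ii]) (use fn u1 in auto)
      finally show ?thesis by simp
    qed
    have "(\<Sum>g\<in>PiE {..<Suc n} L. cw ?Ep P (Suc n) g)
        = (\<Sum>y\<in>L n. \<Sum>h\<in>PiE {..<n} L. cw ?Ep P (Suc n) (h(n:=y)))" by (rule sum_PiE_Suc)
    also have "\<dots> = (\<Sum>y\<in>L n. \<Sum>h\<in>PiE {..<n} L. cw ?Ep P n h * (if snd (h (n-1)) = fst y then trans ?Ep P y else 0))"
      by (intro sum.cong refl) (simp add: step)
    also have "\<dots> = (\<Sum>h\<in>PiE {..<n} L. \<Sum>y\<in>L n. cw ?Ep P n h * (if snd (h (n-1)) = fst y then trans ?Ep P y else 0))"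
      by (rule sum.swap)
    also have "\<dots> = (\<Sum>h\<in>PiE {..<n} L. cw ?Ep P n h * trans E1 P1 (f n))"
    proof (rule sum.cong[OF refl])
      fix h assume h: "h \<in> PiE {..<n} L"
      show "(\<Sum>y\<in>L n. cw ?Ep P n h * (if snd (h (n-1)) = fst y then trans ?Ep P y else 0)) = cw ?Ep P n h * trans E1 P1 (f n)"
        by (simp only: sum_distrib_left[symmetric] inner[OF h])
    qed
    also have "\<dots> = P1 (f 0) * (\<Prod>i\<in>{1..<n}. trans E1 P1 (f i)) * trans E1 P1 (f n)"
      by (simp only: sum_distrib_right[symmetric] IH)
    also have "\<dots> = P1 (f 0) * (\<Prod>i\<in>{1..<Suc n}. trans E1 P1 (f i))"
      using n1 by (simp add: prod.atLeastLessThan_Suc)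
    finally show ?thesis by (simp add: L_def)
  qed
qed




theorem lemma27:
  fixes V1 :: "'a set" and E1 :: "('a \<times> 'a) set"
    and V2 :: "'b set" and E2 :: "('b \<times> 'b) set"
    and P :: "(('a \<times> 'b) \<times> ('a \<times> 'b)) \<Rightarrow> real"
    and P1 :: "('a \<times> 'a) \<Rightarrow> real"
    and M :: "(int \<Rightarrow> (('a \<times> 'b) \<times> ('a \<times> 'b))) measure"
    and M1 :: "(int \<Rightarrow> ('a \<times> 'a)) measure"
  assumes G1: "simple_digraph V1 E1"
    and G2: "simple_digraph V2 E2"
    and chain: "stationary_mc (V1 \<times> V2) (prod_edges E1 E2) P"
    and chain1: "stationary_mc V1 E1 P1"
    and proc: "markov_process (V1 \<times> V2) (prod_edges E1 E2) P M"
    and proc1: "markov_process V1 E1 P1 M1"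
    and i: "\<forall>e\<in>E1. P1 e = (\<Sum>e'\<in>{e'\<in>prod_edges E1 E2. edge1 e' = e}. P e')"
    and ii: "\<forall>u0\<in>V2. \<forall>v0\<in>V1. \<forall>v1\<in>V1.
              (\<Sum>u1\<in>V2. trans_prob (prod_edges E1 E2) P (v0, u0) (v1, u1))
                = trans_prob E1 P1 v0 v1"
  shows "distr M seq_space marg1 = M1"
proof -
  let ?Ep = "prod_edges E1 E2"
  have fin: "finite V1" "finite V2" "E1 \<subseteq> V1 \<times> V1" "E2 \<subseteq> V2 \<times> V2"
    using G1 G2 by (auto simp: simple_digraph_def)
  have EpV: "?Ep \<subseteq> (V1 \<times> V2) \<times> (V1 \<times> V2)" using fin by (auto simp: prod_edges_def)
  have finEp: "finite ?Ep"
    by (rule finite_subset[OF EpV]) (use fin in auto)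
  have finE1: "finite E1" by (rule finite_subset[OF fin(3)]) (use fin in auto)
  interpret mcp "V1 \<times> V2" ?Ep P M using chain proc finEp EpV by unfold_locales
  have meas: "marg1 \<in> measurable M seq_space"
  proof -
    have "(marg1 :: (int \<Rightarrow> (('a \<times> 'b) \<times> ('a \<times> 'b))) \<Rightarrow> _) \<in> measurable seq_space seq_space"
      unfolding seq_space_def marg1_def
    proof (rule measurable_PiM_single')
      fix j :: int
      show "(\<lambda>\<omega>. edge1 (\<omega> j)) \<in> measurable (PiM UNIV (\<lambda>_. count_space UNIV)) (count_space UNIV)"
        by (rule measurable_compose[OF measurable_component_singleton]) auto
    qed (auto simp: space_PiM)
    then show ?thesis by (subst measurable_cong_sets[OF setsN refl])
  qed
  define D where "D = distr M seq_space marg1"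
  have spD: "space D = UNIV" by (simp add: D_def space_seq)
  have "markov_process V1 E1 P1 D"
    unfolding markov_process_def
  proof (intro conjI allI impI)
    show "prob_space D" unfolding D_def by (rule prob_space_distr[OF meas])
    show "sets D = sets seq_space" by (simp add: D_def)
  next
    fix k :: int and n :: nat and f
    assume n: "1 \<le> n" and pf: "is_path E1 n f"
    have S: "{\<omega> \<in> space D. \<forall>i<n. \<omega> (k + int i) = f i} = {\<omega>. \<forall>i<n. \<omega> (k + int i) \<in> {f i}}"
      by (simp add: spD)
    have pre: "marg1 -` {\<omega>. \<forall>i<n. \<omega> (k + int i) \<in> {f i}} \<inter> space M
       = {\<omega>. \<forall>i<n. \<omega> (k + int i) \<in> {e. edge1 e = f i}}"
      by (auto simp: spaceN marg1_def)
    have "measure D {\<omega> \<in> space D. \<forall>i<n. \<omega> (k + int i) = f i}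
        = measure M {\<omega>. \<forall>i<n. \<omega> (k + int i) \<in> {e. edge1 e = f i}}"
    proof -
      have "measure D {\<omega> \<in> space D. \<forall>i<n. \<omega> (k + int i) = f i} = measure D {\<omega>. \<forall>i<n. \<omega> (k + int i) \<in> {f i}}"
        by (simp only: S)
      also have "\<dots> = measure M (marg1 -` {\<omega>. \<forall>i<n. \<omega> (k + int i) \<in> {f i}} \<inter> space M)"
        unfolding D_def by (rule measure_distr[OF meas sets_cyl])
      also have "\<dots> = measure M {\<omega>. \<forall>i<n. \<omega> (k + int i) \<in> {e. edge1 e = f i}}"
        by (simp only: pre)
      finally show ?thesis .
    qed
    also have "\<dots> = (\<Sum>g\<in>PiE {..<n} (\<lambda>i. {e. edge1 e = f i} \<inter> ?Ep). cw ?Ep P n g)"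
      by (rule cyl[OF n])
    also have "\<dots> = P1 (f 0) * (\<Prod>i\<in>{1..<n}. trans E1 P1 (f i))"
      by (rule comb[OF G1 G2 i ii n pf])
    finally show "measure D {\<omega> \<in> space D. \<forall>i<n. \<omega> (k + int i) = f i}
        = P1 (f 0) * (\<Prod>i\<in>{1..<n}. trans E1 P1 (f i))" .
  qed
  then have "D = M1" by (rule mp_unique[OF _ proc1 chain1 finE1 fin(3)])
  then show ?thesis by (simp add: D_def)
qed


end
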